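(* Let $(X_n)_{n\ge1}$ be real random variables with densities $(p_n)_{n\ge1}$, $\mathbb{E}X_n=0$, $\mathrm{Var}(X_n)=1$ for all $n$, and $\sup_n\mathbb{E}|X_n|^s<\infty$ for some $s>2$. Suppose one of the following holds: (1) there is $q\in(2,\infty]$ with $\sup_n\|p_n-\phi\|_q<\infty$; (2) $\limsup_n\|p_n\|_2\le\|\phi\|_2$. Then the following are equivalent: (i) $\|p_n-\phi\|_1\to0$; (ii) $\|p_n-\phi\|_2\to0$; (iii) $\mathrm{KL}(X_n\|G)\to0$, as $n\to\infty$.
   Context: $\phi(x)=(2\pi)^{-1/2}e^{-x^2/2}$ is the density of a standard Gaussian random variable $G$; $\mathrm{KL}(X_n\|G)=\int p_n\ln(p_n/\phi)$; $\|\cdot\|_q$ is the $L^q(\mathbb{R})$ norm. *)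

theory Defs
  imports "HOL-Probability.Probability"
begin

abbreviation phi :: "real \<Rightarrow> real" where "phi \<equiv> std_normal_density"

definition is_density :: "(real \<Rightarrow> real) \<Rightarrow> bool" where
  "is_density p \<longleftrightarrow> p \<in> borel_measurable lborel \<and> (\<forall>x. 0 \<le> p x)
     \<and> (\<integral>\<^sup>+ x. ennreal (p x) \<partial>lborel) = 1"

definition Lq_pow :: "real \<Rightarrow> (real \<Rightarrow> real) \<Rightarrow> ennreal" where
  "Lq_pow q f = (\<integral>\<^sup>+ x. ennreal (\<bar>f x\<bar> powr q) \<partial>lborel)"

definition Linf_le :: "(real \<Rightarrow> real) \<Rightarrow> real \<Rightarrow> bool" where
  "Linf_le f C \<longleftrightarrow> (AE x in lborel. \<bar>f x\<bar> \<le> C)"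

text \<open>KL(p || G) = integral of p ln(p/phi), valued in (-\<infinity>,\<infinity>]; it is +\<infinity> when
  p ln(p/phi) is not Lebesgue integrable (its negative part is always integrable
  for densities with finite second moment, so this is the standard value).\<close>
definition KL_gauss :: "(real \<Rightarrow> real) \<Rightarrow> ereal" where
  "KL_gauss p = (if integrable lborel (\<lambda>x. p x * ln (p x / phi x))
                 then ereal (\<integral>x. p x * ln (p x / phi x) \<partial>lborel) else \<infinity>)"

end

theory Submission
  imports Defs "HOL-Real_Asymp.Real_Asymp"
begin


lemma kl_lower: fixes a b :: real assumes "0 \<le> a" "0 < b" shows "0 \<le> a * ln (a/b) - a + b"
proof (cases "a = 0")
  case True then show ?thesis using assms by simp
next
  case False
  then have a: "a > 0" using assms by simp
  have "ln (b/a) \<le> b/a - 1" using a assms by (intro ln_le_minus_one) simp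
  moreover have "ln (a/b) = - ln (b/a)" using a assms by (simp add: ln_div)
  ultimately have "a * ln (a/b) \<ge> a * (1 - b/a)" using a by (intro mult_left_mono) auto
  moreover have "a * (1 - b/a) = a - b" using a by (simp add: field_simps)
  ultimately show ?thesis by linarith
qed

lemma kl_upper: fixes a b :: real assumes "0 \<le> a" "0 < b" shows "a * ln (a/b) - a + b \<le> (a-b)^2/b"
proof (cases "a = 0")
  case True then show ?thesis using assms by (simp add: power2_eq_square)
next
  case False
  then have a: "a > 0" using assms by simp
  have "ln (a/b) \<le> a/b - 1" using a assms by (intro ln_le_minus_one) simp
  then have "a * ln (a/b) \<le> a * (a/b - 1)" using a by (intro mult_left_mono) auto
  then show ?thesis using a assms by (simp add: field_simps power2_eq_square)
qed

lemma phi_pos: "0 < phi x" by (simp add: normal_density_pos)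

lemma phi_le1: "phi x \<le> 1"
proof -
  have "exp (- x\<^sup>2 / 2) \<le> 1" by simp
  moreover have "1 / sqrt (2*pi) \<le> 1" using pi_gt3 by (simp add: divide_le_eq_1 )
  ultimately show ?thesis unfolding std_normal_density_def
    by (metis mult_le_one  exp_ge_zero divide_nonneg_nonneg real_sqrt_ge_zero zero_le_one  mult_nonneg_nonneg pi_ge_zero order.trans )
qed

lemma ln_phi: "ln (phi x) = - ln (sqrt (2*pi)) - x^2/2"
  unfolding std_normal_density_def by (simp add: ln_mult ln_div)

lemma kl_tail: fixes a :: real assumes "0 \<le> a"
  shows "a * ln (a / phi x) - a + phi x \<le> a^2 + a*x^2/2 + phi x"
proof (cases "a = 0")
  case True then show ?thesis by simp
next
  case False
  then have a: "a > 0" using assms by simp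
  have l: "ln (a / phi x) = ln a + ln (sqrt (2*pi)) + x^2/2"
    using a phi_pos[of x] by (simp add: ln_div ln_phi)
  have "ln a \<le> a - 1" using a by (intro ln_le_minus_one) 
  have "ln (sqrt (2*pi)) \<le> sqrt (2*pi) - 1" by (intro ln_le_minus_one) simp
  moreover have "sqrt (2*pi) \<le> 3"
  proof -
    have "sqrt (2*pi) \<le> sqrt (3^2)" using pi_less_4 by (intro real_sqrt_le_mono) simp
    then show ?thesis by simp
  qed
  ultimately have "ln a + ln (sqrt (2*pi)) + x^2/2 \<le> a + 1 + x^2/2" using \<open>ln a \<le> a - 1\<close> by linarith
  then have "a * ln (a / phi x) \<le> a * (a + 1 + x^2/2)" unfolding l using a by (intro mult_left_mono) auto
  then show ?thesis by (simp add: algebra_simps power2_eq_square)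
qed

lemma hell0: fixes t :: real assumes "0 \<le> t" shows "(sqrt t - 1)^2 \<le> t * ln t - t + 1"
proof -
  define u where "u = sqrt t"
  have u: "u \<ge> 0" "t = u^2" using assms by (auto simp: u_def)
  have "u * ln u - u + 1 \<ge> 0"
    using kl_lower[of u 1] u by simp
  have "t * ln t = 2 * u^2 * ln u"
    using u by (cases "u = 0") (auto simp: ln_powr powr_numeral[symmetric] ln_mult simp del: powr_numeral)
  hence "t * ln t - t + 1 - (u - 1)^2 = 2 * u * (u * ln u - u + 1)" using u by (simp add: algebra_simps power2_eq_square)
  moreover have "2 * u * (u * ln u - u + 1) \<ge> 0" using u \<open>u * ln u - u + 1 \<ge> 0\<close> by simp
  ultimately show ?thesis by (simp add: u_def)
qed

lemma amgm: fixes x y e :: real assumes "0 < e" shows "x * y \<le> x^2/(2*e) + e*y^2/2"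
proof -
  have "0 \<le> (x - e*y)^2/(2*e)" using assms by simp
  also have "(x - e*y)^2/(2*e) = x^2/(2*e) + e*y^2/2 - x*y" using assms
    by (simp add: field_simps power2_eq_square)
  finally show ?thesis by simp
qed

lemma pinsk: fixes a b e :: real assumes a: "0 \<le> a" and b: "0 < b" and e: "0 < e"
  shows "\<bar>a - b\<bar> \<le> (a * ln (a/b) - a + b)/(2*e) + e*(a+b)"
proof -
  have h: "(sqrt (a/b) - 1)^2 \<le> (a/b) * ln (a/b) - a/b + 1" using a b by (intro hell0) simp
  have "b * (sqrt (a/b) - 1)^2 = (sqrt a - sqrt b)^2" using a b
    by (simp add: power2_eq_square algebra_simps real_sqrt_divide) (simp add: field_simps)
  moreover have "b * ((a/b) * ln (a/b) - a/b + 1) = a * ln (a/b) - a + b" using b by (simp add: field_simps)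
  ultimately have H: "(sqrt a - sqrt b)^2 \<le> a * ln (a/b) - a + b"
    using h b by (metis mult_left_mono less_imp_le)
  have ab: "a - b = (sqrt a - sqrt b)*(sqrt a + sqrt b)" using a b by (simp add: algebra_simps)
  have "\<bar>a - b\<bar> = \<bar>sqrt a - sqrt b\<bar> * (sqrt a + sqrt b)"
    unfolding ab abs_mult using a b by simp
  also have "\<dots> \<le> \<bar>sqrt a - sqrt b\<bar>^2/(2*e) + e*(sqrt a + sqrt b)^2/2" by (rule amgm[OF e])
  also have "\<bar>sqrt a - sqrt b\<bar>^2 = (sqrt a - sqrt b)^2" by simp
  also have "(sqrt a + sqrt b)^2 \<le> 2*(a+b)"
  proof -
    have "0 \<le> (sqrt a - sqrt b)^2" by simp
    then show ?thesis using a b by (simp add: power2_eq_square algebra_simps)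
  qed
  hence "e*(sqrt a + sqrt b)^2/2 \<le> e*(a+b)" using e by (simp add: mult_left_mono) 
  finally show ?thesis using H e by (smt (verit) divide_right_mono)
qed

lemma abs_powr2: "\<bar>y::real\<bar> powr 2 = y^2"
proof (cases "y = 0")
  case False
  have "\<bar>y\<bar> powr 2 = \<bar>y\<bar> powr (real 2)" by simp
  also have "\<dots> = \<bar>y\<bar>^2" using False by (intro powr_realpow) simp
  finally show ?thesis by simp
qed simp

lemma Lq1: "Lq_pow 1 f = (\<integral>\<^sup>+x. ennreal \<bar>f x\<bar> \<partial>lborel)"
  unfolding Lq_pow_def by simp

lemma Lq2: "Lq_pow 2 f = (\<integral>\<^sup>+x. ennreal ((f x)^2) \<partial>lborel)"
  unfolding Lq_pow_def abs_powr2 by simp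

definition KK :: "real \<Rightarrow> real" where "KK R = sqrt (2*pi) * exp (R^2/2)"

lemma KK_pos: "KK R > 0" by (simp add: KK_def)

lemma phi_KK: assumes "\<bar>x\<bar> \<le> R" shows "1 \<le> KK R * phi x"
proof -
  have "x^2 \<le> R^2" using assms by (metis abs_le_square_iff power2_abs abs_ge_self order.trans abs_le_iff)
  hence "exp (- (x^2)/2) * exp (R^2/2) \<ge> 1"
    by (simp add: exp_add[symmetric] )
  then show ?thesis unfolding KK_def std_normal_density_def by (simp add: field_simps)
qed

lemma L4:
  fixes p :: "real \<Rightarrow> real" and R d :: real
  assumes pm: "p \<in> borel_measurable lborel" and p0: "\<And>x. 0 \<le> p x" and R: "R > 0" and d: "d > 0"
  shows "Lq_pow 1 (\<lambda>x. p x - phi x) \<le> ennreal (1/(2*d)) * Lq_pow 2 (\<lambda>x. p x - phi x)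
     + ennreal (d * KK R / 2) * (\<integral>\<^sup>+x. ennreal (phi x) \<partial>lborel)
     + ennreal (1/R^2) * ((\<integral>\<^sup>+x. ennreal (x^2 * p x) \<partial>lborel) + (\<integral>\<^sup>+x. ennreal (x^2 * phi x) \<partial>lborel))"
proof -
  have pw: "\<bar>p x - phi x\<bar> \<le> 1/(2*d) * (p x - phi x)^2 + d * KK R / 2 * phi x + 1/R^2 * (x^2 * p x + x^2 * phi x)" for x
  proof (cases "\<bar>x\<bar> \<le> R")
    case True
    have "\<bar>p x - phi x\<bar> * 1 \<le> \<bar>p x - phi x\<bar>^2/(2*d) + d * 1^2/2" by (rule amgm[OF d])
    moreover have "d * 1^2/2 \<le> d * KK R / 2 * phi x" using phi_KK[OF True] d by (simp add: field_simps)
    moreover have "0 \<le> 1/R^2 * (x^2 * p x + x^2 * phi x)" using p0[of x] phi_pos[of x] by simp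
    ultimately show ?thesis by simp
  next
    case False
    have "R^2 \<le> x^2" using False R by (metis abs_le_square_iff power2_abs abs_of_pos less_imp_le not_le)
    hence "1 \<le> x^2 / R^2" using R by simp
    hence "p x + phi x \<le> (x^2/R^2) * (p x + phi x)" using p0[of x] phi_pos[of x]
      using mult_right_mono[of 1 "x^2/R^2" "p x + phi x"] by simp
    moreover have "\<bar>p x - phi x\<bar> \<le> p x + phi x" using p0[of x] phi_pos[of x] by simp
    moreover have "0 \<le> 1/(2*d) * (p x - phi x)^2 + d * KK R / 2 * phi x"
      using d KK_pos[of R] phi_pos[of x] by simp
    moreover have "1/R^2 * (x^2 * p x + x^2 * phi x) = (x^2/R^2) * (p x + phi x)" by (simp add: field_simps)
    ultimately show ?thesis by linarith
  qed
  have "Lq_pow 1 (\<lambda>x. p x - phi x) \<le> (\<integral>\<^sup>+x. ennreal (1/(2*d)) * ennreal ((p x - phi x)^2)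
      + ennreal (d * KK R / 2) * ennreal (phi x) + ennreal (1/R^2) * (ennreal (x^2 * p x) + ennreal (x^2 * phi x)) \<partial>lborel)"
    unfolding Lq1
  proof (rule nn_integral_mono)
    fix x
    have "ennreal (1/(2*d)) * ennreal ((p x - phi x)^2)
      + ennreal (d * KK R / 2) * ennreal (phi x) + ennreal (1/R^2) * (ennreal (x^2 * p x) + ennreal (x^2 * phi x))
      = ennreal (1/(2*d) * (p x - phi x)^2 + d * KK R / 2 * phi x + 1/R^2 * (x^2 * p x + x^2 * phi x))"
      using d KK_pos[of R] phi_pos[of x] p0[of x]
      by (simp del: ennreal_plus add: ennreal_plus[symmetric] ennreal_mult[symmetric])
    then show "ennreal \<bar>p x - phi x\<bar> \<le> ennreal (1/(2*d)) * ennreal ((p x - phi x)^2)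
      + ennreal (d * KK R / 2) * ennreal (phi x) + ennreal (1/R^2) * (ennreal (x^2 * p x) + ennreal (x^2 * phi x))"
      using pw[of x] by (simp add: ennreal_leI)
  qed
  also have "\<dots> = ennreal (1/(2*d)) * Lq_pow 2 (\<lambda>x. p x - phi x)
     + ennreal (d * KK R / 2) * (\<integral>\<^sup>+x. ennreal (phi x) \<partial>lborel)
     + ennreal (1/R^2) * ((\<integral>\<^sup>+x. ennreal (x^2 * p x) \<partial>lborel) + (\<integral>\<^sup>+x. ennreal (x^2 * phi x) \<partial>lborel))"
    unfolding Lq2 using pm by (simp add: nn_integral_add nn_integral_cmult)
  finally show ?thesis .
qed

definition GG :: "(real \<Rightarrow> real) \<Rightarrow> real \<Rightarrow> real" where
  "GG p x = p x * ln (p x / phi x) - p x + phi x"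

lemma GG_nonneg: "0 \<le> p x \<Longrightarrow> 0 \<le> GG p x"
  unfolding GG_def using kl_lower phi_pos by blast

lemma L2:
  fixes p :: "real \<Rightarrow> real" and e :: real
  assumes pm: "p \<in> borel_measurable lborel" and p0: "\<And>x. 0 \<le> p x" and e: "e > 0"
  shows "Lq_pow 1 (\<lambda>x. p x - phi x) \<le> ennreal (1/(2*e)) * (\<integral>\<^sup>+x. ennreal (GG p x) \<partial>lborel)
     + ennreal e * ((\<integral>\<^sup>+x. ennreal (p x) \<partial>lborel) + (\<integral>\<^sup>+x. ennreal (phi x) \<partial>lborel))"
proof -
  have "Lq_pow 1 (\<lambda>x. p x - phi x) \<le> (\<integral>\<^sup>+x. ennreal (1/(2*e)) * ennreal (GG p x)
      + ennreal e * (ennreal (p x) + ennreal (phi x)) \<partial>lborel)"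
    unfolding Lq1
  proof (rule nn_integral_mono)
    fix x
    have "ennreal (1/(2*e)) * ennreal (GG p x) + ennreal e * (ennreal (p x) + ennreal (phi x))
      = ennreal (GG p x/(2*e) + e * (p x + phi x))"
      using e phi_pos[of x] p0[of x] GG_nonneg[of p x]
      by (simp del: ennreal_plus add: ennreal_plus[symmetric] ennreal_mult[symmetric])
    moreover have "\<bar>p x - phi x\<bar> \<le> GG p x/(2*e) + e * (p x + phi x)"
      unfolding GG_def by (rule pinsk[OF p0 phi_pos e])
    ultimately show "ennreal \<bar>p x - phi x\<bar> \<le> ennreal (1/(2*e)) * ennreal (GG p x)
      + ennreal e * (ennreal (p x) + ennreal (phi x))"
      by (simp add: ennreal_leI)
  qed
  also have "\<dots> = ennreal (1/(2*e)) * (\<integral>\<^sup>+x. ennreal (GG p x) \<partial>lborel)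
     + ennreal e * ((\<integral>\<^sup>+x. ennreal (p x) \<partial>lborel) + (\<integral>\<^sup>+x. ennreal (phi x) \<partial>lborel))"
    using pm by (simp add: nn_integral_add nn_integral_cmult GG_def)
  finally show ?thesis .
qed

lemma LN:
  fixes p :: "real \<Rightarrow> real" and R s :: real
  assumes pm: "p \<in> borel_measurable lborel" and p0: "\<And>x. 0 \<le> p x" and R: "R \<ge> 1" and s: "s > 2"
  shows "(\<integral>\<^sup>+x. ennreal (GG p x) \<partial>lborel) \<le> ennreal (KK R + 2) * Lq_pow 2 (\<lambda>x. p x - phi x)
     + ennreal (3/R^2) * (\<integral>\<^sup>+x. ennreal (x^2 * phi x) \<partial>lborel)
     + ennreal (R powr (2-s)/2) * (\<integral>\<^sup>+x. ennreal (\<bar>x\<bar> powr s * p x) \<partial>lborel)"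
proof -
  have pw: "GG p x \<le> (KK R + 2) * (p x - phi x)^2 + 3/R^2 * (x^2 * phi x) + R powr (2-s)/2 * (\<bar>x\<bar> powr s * p x)" for x
  proof (cases "\<bar>x\<bar> \<le> R")
    case True
    have "GG p x \<le> (p x - phi x)^2 / phi x" unfolding GG_def by (rule kl_upper[OF p0 phi_pos])
    also have "\<dots> \<le> KK R * (p x - phi x)^2"
    proof -
      have "(p x - phi x)^2 * 1 \<le> (p x - phi x)^2 * (KK R * phi x)"
        using phi_KK[OF True] by (intro mult_left_mono) auto
      then show ?thesis using phi_pos[of x] by (simp add: field_simps)
    qed
    also have "\<dots> \<le> (KK R + 2) * (p x - phi x)^2" by (simp add: mult_right_mono)
    finally show ?thesis using p0[of x] phi_pos[of x] R by (smt (verit) mult_nonneg_nonneg powr_ge_zero abs_ge_zero zero_le_power2 divide_nonneg_nonneg)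
  next
    case False
    have x: "R < \<bar>x\<bar>" using False by simp
    have "R^2 \<le> x^2" using x R by (metis abs_le_square_iff power2_abs abs_of_pos less_imp_le less_le_trans zero_less_one)
    hence "1 \<le> x^2 / R^2" using R by simp
    hence A1: "3 * phi x \<le> 3/R^2 * (x^2 * phi x)" using phi_pos[of x]
      using mult_right_mono[of 1 "x^2/R^2" "3 * phi x"] by (simp add: field_simps)
    have "x^2 \<le> R powr (2-s) * \<bar>x\<bar> powr s"
    proof -
      have xs: "\<bar>x\<bar> powr s = \<bar>x\<bar> powr 2 * \<bar>x\<bar> powr (s-2)"
      proof -
        have "\<bar>x\<bar> powr s = \<bar>x\<bar> powr (2 + (s-2))" by simp
        also have "\<dots> = \<bar>x\<bar> powr 2 * \<bar>x\<bar> powr (s-2)" by (rule powr_add)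
        finally show ?thesis .
      qed
      have "R powr (s-2) \<le> \<bar>x\<bar> powr (s-2)" using x R s by (intro powr_mono2) auto
      hence "R powr (2-s) * R powr (s-2) \<le> R powr (2-s) * \<bar>x\<bar> powr (s-2)" by (simp add: mult_left_mono)
      moreover have "R powr (2-s) * R powr (s-2) = 1" using R by (simp add: powr_add[symmetric])
      ultimately have "1 \<le> R powr (2-s) * \<bar>x\<bar> powr (s-2)" by simp
      hence "x^2 * 1 \<le> x^2 * (R powr (2-s) * \<bar>x\<bar> powr (s-2))" by (intro mult_left_mono) auto
      then show ?thesis unfolding xs abs_powr2 by (simp add: ac_simps)
    qed
    hence A2: "p x * x^2/2 \<le> R powr (2-s)/2 * (\<bar>x\<bar> powr s * p x)"
      using p0[of x] mult_left_mono[of "x^2" "R powr (2-s) * \<bar>x\<bar> powr s" "p x"] by (simp add: ac_simps)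
    have A3: "(p x)^2 \<le> 2 * (p x - phi x)^2 + 2 * phi x"
    proof -
      have "(phi x)^2 \<le> phi x" using phi_le1[of x] phi_pos[of x] by (simp add: power2_eq_square mult_left_le)
      moreover have "(p x)^2 \<le> 2 * (p x - phi x)^2 + 2 * (phi x)^2"
        using sum_squares_ge_zero[of "p x - 2*phi x" 0] by (simp add: power2_eq_square algebra_simps)
      ultimately show ?thesis by linarith
    qed
    have "GG p x \<le> (p x)^2 + p x * x^2/2 + phi x" unfolding GG_def by (rule kl_tail[OF p0])
    moreover have "0 \<le> KK R * (p x - phi x)^2" using KK_pos[of R] by simp
    ultimately show ?thesis using A1 A2 A3 by (simp add: algebra_simps)
  qed
  have "(\<integral>\<^sup>+x. ennreal (GG p x) \<partial>lborel) \<le> (\<integral>\<^sup>+x. ennreal (KK R + 2) * ennreal ((p x - phi x)^2)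
      + ennreal (3/R^2) * ennreal (x^2 * phi x) + ennreal (R powr (2-s)/2) * ennreal (\<bar>x\<bar> powr s * p x) \<partial>lborel)"
  proof (rule nn_integral_mono)
    fix x
    have "ennreal (KK R + 2) * ennreal ((p x - phi x)^2)
      + ennreal (3/R^2) * ennreal (x^2 * phi x) + ennreal (R powr (2-s)/2) * ennreal (\<bar>x\<bar> powr s * p x)
      = ennreal ((KK R + 2) * (p x - phi x)^2 + 3/R^2 * (x^2 * phi x) + R powr (2-s)/2 * (\<bar>x\<bar> powr s * p x))"
      using KK_pos[of R] phi_pos[of x] p0[of x]
      by (simp del: ennreal_plus add: ennreal_plus[symmetric] ennreal_mult[symmetric])
    then show "ennreal (GG p x) \<le> ennreal (KK R + 2) * ennreal ((p x - phi x)^2)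
      + ennreal (3/R^2) * ennreal (x^2 * phi x) + ennreal (R powr (2-s)/2) * ennreal (\<bar>x\<bar> powr s * p x)"
      using pw[of x] by (simp add: ennreal_leI)
  qed
  also have "\<dots> = ennreal (KK R + 2) * Lq_pow 2 (\<lambda>x. p x - phi x)
     + ennreal (3/R^2) * (\<integral>\<^sup>+x. ennreal (x^2 * phi x) \<partial>lborel)
     + ennreal (R powr (2-s)/2) * (\<integral>\<^sup>+x. ennreal (\<bar>x\<bar> powr s * p x) \<partial>lborel)"
    unfolding Lq2 using pm by (simp add: nn_integral_add nn_integral_cmult)
  finally show ?thesis .
qed



lemma L3a:
  fixes f :: "real \<Rightarrow> real" and M q :: real
  assumes fm: "f \<in> borel_measurable lborel" and M: "M > 0" and q: "q > 2"
  shows "Lq_pow 2 f \<le> ennreal M * Lq_pow 1 f + ennreal (M powr (2-q)) * Lq_pow q f"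
proof -
  have pw: "(f x)^2 \<le> M * \<bar>f x\<bar> + M powr (2-q) * \<bar>f x\<bar> powr q" for x
  proof (cases "\<bar>f x\<bar> \<le> M")
    case True
    have "(f x)^2 = \<bar>f x\<bar> * \<bar>f x\<bar>" by (simp add: power2_eq_square)
    also have "\<dots> \<le> M * \<bar>f x\<bar>" using True by (intro mult_right_mono) auto
    finally have "(f x)^2 \<le> M * \<bar>f x\<bar>" .
    moreover have "0 \<le> M powr (2-q) * \<bar>f x\<bar> powr q" by simp
    ultimately show ?thesis by linarith
  next
    case False
    have xs: "\<bar>f x\<bar> powr q = \<bar>f x\<bar> powr 2 * \<bar>f x\<bar> powr (q-2)"
    proof -
      have "\<bar>f x\<bar> powr q = \<bar>f x\<bar> powr (2 + (q-2))" by simp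
      also have "\<dots> = \<bar>f x\<bar> powr 2 * \<bar>f x\<bar> powr (q-2)" by (rule powr_add)
      finally show ?thesis .
    qed
    have "M powr (q-2) \<le> \<bar>f x\<bar> powr (q-2)" using False M q by (intro powr_mono2) auto
    hence "M powr (2-q) * M powr (q-2) \<le> M powr (2-q) * \<bar>f x\<bar> powr (q-2)" by (simp add: mult_left_mono)
    moreover have "M powr (2-q) * M powr (q-2) = 1" using M by (simp add: powr_add[symmetric])
    ultimately have "1 \<le> M powr (2-q) * \<bar>f x\<bar> powr (q-2)" by simp
    hence "(f x)^2 * 1 \<le> (f x)^2 * (M powr (2-q) * \<bar>f x\<bar> powr (q-2))" by (intro mult_left_mono) auto
    hence "(f x)^2 \<le> M powr (2-q) * \<bar>f x\<bar> powr q" unfolding xs abs_powr2 by (simp add: ac_simps)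
    then show ?thesis using M by (smt (verit) mult_nonneg_nonneg abs_ge_zero)
  qed
  have "Lq_pow 2 f \<le> (\<integral>\<^sup>+x. ennreal M * ennreal \<bar>f x\<bar> + ennreal (M powr (2-q)) * ennreal (\<bar>f x\<bar> powr q) \<partial>lborel)"
    unfolding Lq2
  proof (rule nn_integral_mono)
    fix x
    have "ennreal M * ennreal \<bar>f x\<bar> + ennreal (M powr (2-q)) * ennreal (\<bar>f x\<bar> powr q)
       = ennreal (M * \<bar>f x\<bar> + M powr (2-q) * \<bar>f x\<bar> powr q)" using M
      by (simp del: ennreal_plus add: ennreal_plus[symmetric] ennreal_mult[symmetric])
    then show "ennreal ((f x)^2) \<le> ennreal M * ennreal \<bar>f x\<bar> + ennreal (M powr (2-q)) * ennreal (\<bar>f x\<bar> powr q)"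
      using pw[of x] by (simp add: ennreal_leI)
  qed
  also have "\<dots> = ennreal M * Lq_pow 1 f + ennreal (M powr (2-q)) * Lq_pow q f"
    unfolding Lq1 using fm by (simp add: nn_integral_add nn_integral_cmult Lq_pow_def)
  finally show ?thesis .
qed

lemma L3b:
  fixes f :: "real \<Rightarrow> real"
  assumes fm: "f \<in> borel_measurable lborel" and C: "Linf_le f C"
  shows "Lq_pow 2 f \<le> ennreal C * Lq_pow 1 f"
proof -
  have "Lq_pow 2 f \<le> (\<integral>\<^sup>+x. ennreal C * ennreal \<bar>f x\<bar> \<partial>lborel)"
    unfolding Lq2
  proof (rule nn_integral_mono_AE)
    show "AE x in lborel. ennreal ((f x)^2) \<le> ennreal C * ennreal \<bar>f x\<bar>"
      using C unfolding Linf_le_def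
    proof (eventually_elim)
      case (elim x)
      have "(f x)^2 = \<bar>f x\<bar> * \<bar>f x\<bar>" by (simp add: power2_eq_square)
      also have "\<dots> \<le> C * \<bar>f x\<bar>" using elim by (intro mult_right_mono) auto
      finally have "(f x)^2 \<le> C * \<bar>f x\<bar>" .
      moreover have "0 \<le> C" using elim by linarith
      ultimately show ?case by (simp add: ennreal_mult[symmetric] ennreal_leI)
    qed
  qed
  also have "\<dots> = ennreal C * Lq_pow 1 f" unfolding Lq1 using fm by (simp add: nn_integral_cmult)
  finally show ?thesis .
qed


lemma L3c:
  fixes p :: "real \<Rightarrow> real"
  assumes pm: "p \<in> borel_measurable lborel" and p0: "\<And>x. 0 \<le> p x"
  shows "Lq_pow 2 (\<lambda>x. p x - phi x) + Lq_pow 2 phi \<le> Lq_pow 2 p + 2 * Lq_pow 1 (\<lambda>x. p x - phi x)"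
proof -
  have pw: "(p x - phi x)^2 + (phi x)^2 \<le> (p x)^2 + 2 * \<bar>p x - phi x\<bar>" for x
  proof -
    have "(p x - phi x)^2 + (phi x)^2 - (p x)^2 = 2 * phi x * (phi x - p x)" by (simp add: power2_eq_square algebra_simps)
    also have "\<dots> \<le> 2 * phi x * \<bar>p x - phi x\<bar>" using phi_pos[of x] by (intro mult_left_mono) auto
    also have "\<dots> \<le> 2 * \<bar>p x - phi x\<bar>" using phi_le1[of x] less_imp_le[OF phi_pos[of x]]
      by (simp add: mult_left_le_one_le)
    finally show ?thesis by simp
  qed
  have "Lq_pow 2 (\<lambda>x. p x - phi x) + Lq_pow 2 phi = (\<integral>\<^sup>+x. ennreal ((p x - phi x)^2) + ennreal ((phi x)^2) \<partial>lborel)"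
    unfolding Lq2 using pm by (intro nn_integral_add[symmetric]) auto
  also have "\<dots> \<le> (\<integral>\<^sup>+x. ennreal ((p x)^2) + 2 * ennreal \<bar>p x - phi x\<bar> \<partial>lborel)"
  proof (rule nn_integral_mono)
    fix x
    have "ennreal ((p x - phi x)^2) + ennreal ((phi x)^2) = ennreal ((p x - phi x)^2 + (phi x)^2)" by simp
    also have "\<dots> \<le> ennreal ((p x)^2 + 2 * \<bar>p x - phi x\<bar>)" using pw[of x] by (rule ennreal_leI)
    also have "\<dots> = ennreal ((p x)^2) + ennreal (2 * \<bar>p x - phi x\<bar>)" by (intro ennreal_plus) auto
    also have "ennreal (2 * \<bar>p x - phi x\<bar>) = 2 * ennreal \<bar>p x - phi x\<bar>" by (subst ennreal_mult') auto
    finally show "ennreal ((p x - phi x)^2) + ennreal ((phi x)^2) \<le> ennreal ((p x)^2) + 2 * ennreal \<bar>p x - phi x\<bar>" .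
  qed
  also have "\<dots> = Lq_pow 2 p + 2 * Lq_pow 1 (\<lambda>x. p x - phi x)"
    unfolding Lq2 Lq1 using pm by (subst nn_integral_add) (auto simp: nn_integral_cmult)
  finally show ?thesis .
qed

lemma NF1: "(\<integral>\<^sup>+x. ennreal (phi x) \<partial>lborel) = 1"
  by (subst nn_integral_eq_integral) auto

lemma NF2: "(\<integral>\<^sup>+x. ennreal (x^2 * phi x) \<partial>lborel) = 1"
proof -
  have h: "has_bochner_integral lborel (\<lambda>x. phi x * x^(2*1)) (fact (2*1) / (2^1 * fact 1))"
    by (rule std_normal_moment_even)
  have "has_bochner_integral lborel (\<lambda>x. x^2 * phi x) 1"
    using h by (simp add: mult.commute)
  then show ?thesis
    by (subst nn_integral_eq_integral) (auto simp: has_bochner_integral_iff)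
qed

lemma Phi_fin: "Lq_pow 2 phi \<le> 1"
proof -
  have "Lq_pow 2 phi \<le> (\<integral>\<^sup>+x. ennreal (phi x) \<partial>lborel)"
    unfolding Lq2
  proof (rule nn_integral_mono)
    fix x show "ennreal ((phi x)^2) \<le> ennreal (phi x)"
      using phi_le1[of x] phi_pos[of x] by (intro ennreal_leI) (simp add: power2_eq_square mult_left_le)
  qed
  then show ?thesis by (simp add: NF1)
qed


lemma L5:
  fixes p :: "real \<Rightarrow> real"
  assumes pm[measurable]: "p \<in> borel_measurable lborel" and p0: "\<And>x. 0 \<le> p x"
    and p1: "(\<integral>\<^sup>+x. ennreal (p x) \<partial>lborel) = 1"
  shows "KL_gauss p = enn2ereal (\<integral>\<^sup>+x. ennreal (GG p x) \<partial>lborel)"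
proof -
  have "(\<integral>\<^sup>+x. ennreal (p x) \<partial>lborel) = ennreal 1" using p1 by simp
  have ip: "integrable lborel p"
    by (rule integrableI_nn_integral_finite[OF pm _ \<open>_ = ennreal 1\<close>]) (simp add: p0)
  have ip1: "(\<integral>x. p x \<partial>lborel) = 1"
  proof -
    have "(\<integral>\<^sup>+x. ennreal (p x) \<partial>lborel) = ennreal (\<integral>x. p x \<partial>lborel)"
      by (rule nn_integral_eq_integral[OF ip]) (simp add: p0)
    then have "ennreal (\<integral>x. p x \<partial>lborel) = ennreal 1" using p1 by simp
    moreover have "0 \<le> (\<integral>x. p x \<partial>lborel)" using p0 by simp
    ultimately show ?thesis by (simp add: ennreal_inj)
  qed
  have ipd: "integrable lborel (\<lambda>x. p x - phi x)" using ip by (intro Bochner_Integration.integrable_diff) auto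
  have ipd0: "(\<integral>x. p x - phi x \<partial>lborel) = 0" using ip ip1 by (subst Bochner_Integration.integral_diff) auto
  have Gm: "GG p \<in> borel_measurable lborel" unfolding GG_def by measurable
  have geq: "(\<lambda>x. p x * ln (p x / phi x)) = (\<lambda>x. GG p x + (p x - phi x))" by (auto simp: GG_def)
  have G0: "\<And>x. 0 \<le> GG p x" using GG_nonneg[of p] p0 by blast
  show ?thesis
  proof (cases "integrable lborel (\<lambda>x. p x * ln (p x / phi x))")
    case True
    have GGe: "GG p = (\<lambda>x. p x * ln (p x / phi x) - (p x - phi x))" by (auto simp: GG_def fun_eq_iff)
    have iG: "integrable lborel (GG p)"
      unfolding GGe using True ipd by (rule Bochner_Integration.integrable_diff)
    have "(\<integral>x. p x * ln (p x / phi x) \<partial>lborel) = (\<integral>x. GG p x \<partial>lborel) + (\<integral>x. p x - phi x \<partial>lborel)"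
      unfolding geq using iG ipd by (rule Bochner_Integration.integral_add)
    then have e1: "(\<integral>x. p x * ln (p x / phi x) \<partial>lborel) = (\<integral>x. GG p x \<partial>lborel)" using ipd0 by simp
    have e2: "(\<integral>\<^sup>+x. ennreal (GG p x) \<partial>lborel) = ennreal (\<integral>x. GG p x \<partial>lborel)"
      by (rule nn_integral_eq_integral[OF iG]) (simp add: G0)
    have e3: "0 \<le> (\<integral>x. GG p x \<partial>lborel)" using G0 by (simp add: Bochner_Integration.integral_nonneg)
    show ?thesis unfolding KL_gauss_def using True e1 e2 e3 by simp
  next
    case False
    have "(\<integral>\<^sup>+x. ennreal (GG p x) \<partial>lborel) = \<infinity>"
    proof (rule ccontr)
      assume "(\<integral>\<^sup>+x. ennreal (GG p x) \<partial>lborel) \<noteq> \<infinity>"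
      then have r: "(\<integral>\<^sup>+x. ennreal (GG p x) \<partial>lborel) = ennreal (enn2real (\<integral>\<^sup>+x. ennreal (GG p x) \<partial>lborel))"
        by (simp add: ennreal_enn2real less_top)
      have "integrable lborel (GG p)"
        by (rule integrableI_nn_integral_finite[OF Gm _ r]) (simp add: G0)
      then have "integrable lborel (\<lambda>x. GG p x + (p x - phi x))" using ipd by (rule Bochner_Integration.integrable_add)
      then show False using False geq by simp
    qed
    then show ?thesis using False unfolding KL_gauss_def by simp
  qed
qed


lemma e_crit: fixes X :: "nat \<Rightarrow> ennreal"
  shows "X \<longlonglongrightarrow> 0 \<longleftrightarrow> (\<forall>e>0. eventually (\<lambda>n. X n \<le> ennreal e) sequentially)"
proof
  assume "X \<longlonglongrightarrow> 0"
  then show "\<forall>e>0. eventually (\<lambda>n. X n \<le> ennreal e) sequentially"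
    by (auto dest!: order_tendstoD(2)[where a="ennreal _"] elim: eventually_mono)
next
  assume H: "\<forall>e>0. eventually (\<lambda>n. X n \<le> ennreal e) sequentially"
  show "X \<longlonglongrightarrow> 0"
  proof (rule order_tendstoI)
    fix a :: ennreal assume "a < 0" then show "eventually (\<lambda>n. a < X n) sequentially" by simp
  next
    fix u :: ennreal assume u: "0 < u"
    obtain e where e: "e > 0" "ennreal e < u"
    proof (cases "u = \<infinity>")
      case True then show ?thesis using that[of 1] by simp
    next
      case False
      then have "u = ennreal (enn2real u)" by (simp add: less_top)
      moreover have "enn2real u > 0" using u False by (simp add: enn2real_positive_iff less_top)
      ultimately show ?thesis using that[of "enn2real u / 2"]
        by (metis ennreal_lessI half_gt_zero less_add_same_cancel1 field_sum_of_halves)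
    qed
    from H e(1) have "eventually (\<lambda>n. X n \<le> ennreal e) sequentially" by blast
    then show "eventually (\<lambda>n. X n < u) sequentially" by (rule eventually_mono) (use e in auto)
  qed
qed

lemma enn_comb:
  fixes X Y :: ennreal
  assumes "X \<le> ennreal a * Y + ennreal b" "Y \<le> ennreal y" "0 \<le> a" "0 \<le> y" "0 \<le> b" "a*y + b \<le> e"
  shows "X \<le> ennreal e"
proof -
  have "X \<le> ennreal a * ennreal y + ennreal b"
    using assms(1) order.trans add_right_mono mult_left_mono assms(2) by (metis zero_le)
  also have "\<dots> = ennreal (a*y + b)" using assms by (simp add: ennreal_mult)
  also have "\<dots> \<le> ennreal e" using assms(6) by (rule ennreal_leI)
  finally show ?thesis .
qed

lemma exists_large:
  fixes g :: "real \<Rightarrow> real"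
  assumes "(g \<longlongrightarrow> 0) at_top" "e > 0"
  shows "\<exists>R\<ge>1. g R \<le> e"
proof -
  have "eventually (\<lambda>R. g R < e \<and> R \<ge> 1) at_top"
    using order_tendstoD(2)[OF assms] eventually_ge_at_top[of "1::real"] by (rule eventually_conj)
  then obtain N where "\<forall>R\<ge>N. g R < e \<and> R \<ge> 1" by (auto simp: eventually_at_top_linorder)
  then show ?thesis by (metis linorder_le_cases less_imp_le order.trans)
qed

lemma powr_lim: fixes a c :: real assumes "a < 0" shows "((\<lambda>R. R powr a * c) \<longlongrightarrow> 0) at_top"
  using tendsto_mult_left_zero[OF tendsto_neg_powr[OF assms filterlim_ident]] by simp


lemma dirB:
  fixes p :: "nat \<Rightarrow> real \<Rightarrow> real"
  assumes pm: "\<And>n. p n \<in> borel_measurable lborel" and p0: "\<And>n x. 0 \<le> p n x"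
    and m2: "\<And>n. (\<integral>\<^sup>+x. ennreal (x^2 * p n x) \<partial>lborel) = 1"
    and D: "(\<lambda>n. Lq_pow 2 (\<lambda>x. p n x - phi x)) \<longlonglongrightarrow> 0"
  shows "(\<lambda>n. Lq_pow 1 (\<lambda>x. p n x - phi x)) \<longlonglongrightarrow> 0"
  unfolding e_crit
proof (intro allI impI)
  fix e :: real assume e: "e > 0"
  define R where "R = 1 + 6/e"
  have e6: "6/e > 0" using e by simp
  have R: "R > 0" "R \<ge> 1" using e6 unfolding R_def by linarith+
  have R2: "2/R^2 \<le> e/3"
  proof -
    have "6/e \<le> R" using e by (simp add: R_def)
    also have "R \<le> R^2" using R by (simp add: power2_eq_square)
    finally have "6/e \<le> R^2" .
    then have "6 \<le> e * R^2" using e by (simp add: field_simps)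
    then show ?thesis using R by (simp add: field_simps)
  qed
  define d where "d = 2*e/(3 * KK R)"
  have d: "d > 0" using e KK_pos[of R] by (simp add: d_def)
  have dK: "d * KK R / 2 = e/3" using KK_pos[of R] by (simp add: d_def field_simps)
  from D have ev: "eventually (\<lambda>n. Lq_pow 2 (\<lambda>x. p n x - phi x) \<le> ennreal (2*d*e/3)) sequentially"
    unfolding e_crit using d e by auto
  show "eventually (\<lambda>n. Lq_pow 1 (\<lambda>x. p n x - phi x) \<le> ennreal e) sequentially"
    using ev
  proof (rule eventually_mono)
    fix n assume Dn: "Lq_pow 2 (\<lambda>x. p n x - phi x) \<le> ennreal (2*d*e/3)"
    have E: "ennreal (d * KK R / 2) * 1 + ennreal (1/R^2) * (1 + 1) = ennreal (d * KK R / 2 + 2/R^2)"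
    proof -
      have "ennreal (2/R^2) = ennreal (1/R^2 * 2)" by simp
      also have "\<dots> = ennreal (1/R^2) * ennreal 2" by (rule ennreal_mult) auto
      finally have "ennreal (1/R^2) * (1 + 1) = ennreal (2/R^2)" by (simp add: one_add_one)
      then show ?thesis using d KK_pos[of R] R by simp
    qed
    have "Lq_pow 1 (\<lambda>x. p n x - phi x) \<le> ennreal (1/(2*d)) * Lq_pow 2 (\<lambda>x. p n x - phi x)
      + (ennreal (d * KK R / 2) * 1 + ennreal (1/R^2) * (1 + 1))"
      using L4[OF pm p0 R(1) d] by (simp add: m2 NF1 NF2 add.assoc)
    then have "Lq_pow 1 (\<lambda>x. p n x - phi x) \<le> ennreal (1/(2*d)) * Lq_pow 2 (\<lambda>x. p n x - phi x)
      + ennreal (d * KK R / 2 + 2/R^2)" unfolding E .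
    then show "Lq_pow 1 (\<lambda>x. p n x - phi x) \<le> ennreal e"
    proof (rule enn_comb[OF _ Dn])
      show "1/(2*d) * (2*d*e/3) + (d * KK R / 2 + 2/R^2) \<le> e" using d R2 dK by (simp add: field_simps)
    qed (use d e KK_pos[of R] in auto)
  qed
qed


lemma dirC:
  fixes p :: "nat \<Rightarrow> real \<Rightarrow> real" and s C :: real
  assumes pm: "\<And>n. p n \<in> borel_measurable lborel" and p0: "\<And>n x. 0 \<le> p n x"
    and s: "s > 2" and C: "\<And>n. (\<integral>\<^sup>+ x. ennreal (\<bar>x\<bar> powr s * p n x) \<partial>lborel) \<le> ennreal C"
    and D: "(\<lambda>n. Lq_pow 2 (\<lambda>x. p n x - phi x)) \<longlonglongrightarrow> 0"
  shows "(\<lambda>n. \<integral>\<^sup>+x. ennreal (GG (p n) x) \<partial>lborel) \<longlonglongrightarrow> 0"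
  unfolding e_crit
proof (intro allI impI)
  fix e :: real assume e: "e > 0"
  define C' where "C' = max C 0"
  have C': "C' \<ge> 0" "ennreal C \<le> ennreal C'" by (auto simp: C'_def intro: ennreal_leI)
  have lim: "((\<lambda>R. 3/R^2 + R powr (2-s) * (C'/2)) \<longlongrightarrow> 0) at_top"
  proof -
    have "((\<lambda>R::real. 3/R^2) \<longlongrightarrow> 0) at_top" by real_asymp
    moreover have "((\<lambda>R. R powr (2-s) * (C'/2)) \<longlongrightarrow> 0) at_top" using s by (intro powr_lim) simp
    ultimately show ?thesis using tendsto_add by fastforce
  qed
  obtain R where R: "R \<ge> 1" "3/R^2 + R powr (2-s) * (C'/2) \<le> e/2"
    using exists_large[OF lim, of "e/2"] e by auto
  define y where "y = (e/2)/(KK R + 2)"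
  have k2: "KK R + 2 > 0" using KK_pos[of R] by simp
  have y1: "y > 0" using e k2 by (simp add: y_def)
  have y2: "(KK R + 2) * y = e/2" unfolding y_def using k2 by (metis less_irrefl nonzero_mult_div_cancel_left times_divide_eq_right)
  note y = y1 y2
  from D have ev: "eventually (\<lambda>n. Lq_pow 2 (\<lambda>x. p n x - phi x) \<le> ennreal y) sequentially"
    unfolding e_crit using y by auto
  show "eventually (\<lambda>n. (\<integral>\<^sup>+x. ennreal (GG (p n) x) \<partial>lborel) \<le> ennreal e) sequentially"
    using ev
  proof (rule eventually_mono)
    fix n assume Dn: "Lq_pow 2 (\<lambda>x. p n x - phi x) \<le> ennreal y"
    have E: "ennreal (3/R^2) * 1 + ennreal (R powr (2-s)/2) * ennreal C' = ennreal (3/R^2 + R powr (2-s) * (C'/2))"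
      using C' R by (simp add: ennreal_mult[symmetric])
    have "ennreal (R powr (2-s)/2) * (\<integral>\<^sup>+ x. ennreal (\<bar>x\<bar> powr s * p n x) \<partial>lborel) \<le> ennreal (R powr (2-s)/2) * ennreal C'"
      using C[of n] C'(2) by (intro mult_left_mono) auto
    then have "(\<integral>\<^sup>+x. ennreal (GG (p n) x) \<partial>lborel) \<le> ennreal (KK R + 2) * Lq_pow 2 (\<lambda>x. p n x - phi x)
      + (ennreal (3/R^2) * 1 + ennreal (R powr (2-s)/2) * ennreal C')"
      using LN[OF pm p0 R(1) s, of n] unfolding NF2 add.assoc
      by (meson add_left_mono order.trans)
    then have "(\<integral>\<^sup>+x. ennreal (GG (p n) x) \<partial>lborel) \<le> ennreal (KK R + 2) * Lq_pow 2 (\<lambda>x. p n x - phi x)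
      + ennreal (3/R^2 + R powr (2-s) * (C'/2))" unfolding E .
    then show "(\<integral>\<^sup>+x. ennreal (GG (p n) x) \<partial>lborel) \<le> ennreal e"
    proof (rule enn_comb[OF _ Dn])
      show "(KK R + 2) * y + (3/R^2 + R powr (2-s) * (C'/2)) \<le> e" using y R by linarith
    qed (use y KK_pos[of R] C' in auto)
  qed
qed

lemma dirD:
  fixes p :: "nat \<Rightarrow> real \<Rightarrow> real"
  assumes pm: "\<And>n. p n \<in> borel_measurable lborel" and p0: "\<And>n x. 0 \<le> p n x"
    and p1: "\<And>n. (\<integral>\<^sup>+x. ennreal (p n x) \<partial>lborel) = 1"
    and N: "(\<lambda>n. \<integral>\<^sup>+x. ennreal (GG (p n) x) \<partial>lborel) \<longlonglongrightarrow> 0"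
  shows "(\<lambda>n. Lq_pow 1 (\<lambda>x. p n x - phi x)) \<longlonglongrightarrow> 0"
  unfolding e_crit
proof (intro allI impI)
  fix e :: real assume e: "e > 0"
  define ep where "ep = e/4"
  have ep: "ep > 0" using e by (simp add: ep_def)
  from N have ev: "eventually (\<lambda>n. (\<integral>\<^sup>+x. ennreal (GG (p n) x) \<partial>lborel) \<le> ennreal (e*e/4)) sequentially"
    unfolding e_crit using e by auto
  show "eventually (\<lambda>n. Lq_pow 1 (\<lambda>x. p n x - phi x) \<le> ennreal e) sequentially"
    using ev
  proof (rule eventually_mono)
    fix n assume Nn: "(\<integral>\<^sup>+x. ennreal (GG (p n) x) \<partial>lborel) \<le> ennreal (e*e/4)"
    have E: "ennreal ep * (1 + 1) = ennreal (2*ep)"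
    proof -
      have "ennreal (2*ep) = ennreal (ep * 2)" by (metis mult.commute)
      also have "\<dots> = ennreal ep * ennreal 2" by (rule ennreal_mult) (use ep in auto)
      finally show ?thesis by (simp add: one_add_one)
    qed
    have "Lq_pow 1 (\<lambda>x. p n x - phi x) \<le> ennreal (1/(2*ep)) * (\<integral>\<^sup>+x. ennreal (GG (p n) x) \<partial>lborel) + ennreal (2*ep)"
      using L2[OF pm p0 ep, of n] unfolding p1 NF1 E .
    then show "Lq_pow 1 (\<lambda>x. p n x - phi x) \<le> ennreal e"
    proof (rule enn_comb[OF _ Nn])
      show "1/(2*ep) * (e*e/4) + 2*ep \<le> e" using e by (simp add: ep_def field_simps)
    qed (use ep e in auto)
  qed
qed


lemma dirA:
  fixes p :: "nat \<Rightarrow> real \<Rightarrow> real"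
  assumes pm: "\<And>n. p n \<in> borel_measurable lborel" and p0: "\<And>n x. 0 \<le> p n x"
    and cond: "(\<exists>q>2. \<exists>C::real. \<forall>n. Lq_pow q (\<lambda>x. p n x - phi x) \<le> ennreal C)
             \<or> (\<exists>C::real. \<forall>n. Linf_le (\<lambda>x. p n x - phi x) C)
             \<or> limsup (\<lambda>n. Lq_pow 2 (p n)) \<le> Lq_pow 2 phi"
    and A: "(\<lambda>n. Lq_pow 1 (\<lambda>x. p n x - phi x)) \<longlonglongrightarrow> 0"
  shows "(\<lambda>n. Lq_pow 2 (\<lambda>x. p n x - phi x)) \<longlonglongrightarrow> 0"
proof -
  have fm: "\<And>n. (\<lambda>x. p n x - phi x) \<in> borel_measurable lborel" using pm by measurable
  have Ae: "\<And>y. y > 0 \<Longrightarrow> eventually (\<lambda>n. Lq_pow 1 (\<lambda>x. p n x - phi x) \<le> ennreal y) sequentially"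
    using A unfolding e_crit by blast
  from cond consider (c1) q C where "q > 2" "\<And>n. Lq_pow q (\<lambda>x. p n x - phi x) \<le> ennreal C"
    | (c2) C where "\<And>n. Linf_le (\<lambda>x. p n x - phi x) C"
    | (c3) "limsup (\<lambda>n. Lq_pow 2 (p n)) \<le> Lq_pow 2 phi"
    by blast
  then show ?thesis
  proof cases
    case c1
    show ?thesis unfolding e_crit
    proof (intro allI impI)
      fix e :: real assume e: "e > 0"
      define C' where "C' = max C 0"
      have C': "C' \<ge> 0" "ennreal C \<le> ennreal C'" by (auto simp: C'_def intro: ennreal_leI)
      have lim: "((\<lambda>M. M powr (2-q) * C') \<longlongrightarrow> 0) at_top" using c1 by (intro powr_lim) simp
      obtain M where M: "M \<ge> 1" "M powr (2-q) * C' \<le> e/2"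
        using exists_large[OF lim, of "e/2"] e by auto
      have M0: "M > 0" using M by simp
      have "eventually (\<lambda>n. Lq_pow 1 (\<lambda>x. p n x - phi x) \<le> ennreal (e/2/M)) sequentially"
        using Ae[of "e/2/M"] e M0 by simp
      then show "eventually (\<lambda>n. Lq_pow 2 (\<lambda>x. p n x - phi x) \<le> ennreal e) sequentially"
      proof (rule eventually_mono)
        fix n assume An: "Lq_pow 1 (\<lambda>x. p n x - phi x) \<le> ennreal (e/2/M)"
        have "ennreal (M powr (2-q)) * Lq_pow q (\<lambda>x. p n x - phi x) \<le> ennreal (M powr (2-q)) * ennreal C'"
          using c1(2)[of n] C'(2) by (intro mult_left_mono) auto
        also have "\<dots> = ennreal (M powr (2-q) * C')" using C' by (simp add: ennreal_mult)
        finally have "Lq_pow 2 (\<lambda>x. p n x - phi x) \<le> ennreal M * Lq_pow 1 (\<lambda>x. p n x - phi x) + ennreal (M powr (2-q) * C')"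
          using L3a[OF fm M0 c1(1), of n] by (meson add_left_mono order.trans)
        then show "Lq_pow 2 (\<lambda>x. p n x - phi x) \<le> ennreal e"
        proof (rule enn_comb[OF _ An])
          show "M * (e/2/M) + M powr (2-q) * C' \<le> e" using M M0 by simp
        qed (use M0 e C' in auto)
      qed
    qed
  next
    case c2
    show ?thesis unfolding e_crit
    proof (intro allI impI)
      fix e :: real assume e: "e > 0"
      define C' where "C' = max C 0 + 1"
      have C': "C' > 0" "ennreal C \<le> ennreal C'" by (auto simp: C'_def intro: ennreal_leI)
      have "eventually (\<lambda>n. Lq_pow 1 (\<lambda>x. p n x - phi x) \<le> ennreal (e/C')) sequentially"
        using Ae[of "e/C'"] e C' by simp
      then show "eventually (\<lambda>n. Lq_pow 2 (\<lambda>x. p n x - phi x) \<le> ennreal e) sequentially"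
      proof (rule eventually_mono)
        fix n assume An: "Lq_pow 1 (\<lambda>x. p n x - phi x) \<le> ennreal (e/C')"
        have "Lq_pow 2 (\<lambda>x. p n x - phi x) \<le> ennreal C' * Lq_pow 1 (\<lambda>x. p n x - phi x) + ennreal 0"
          using L3b[OF fm c2[of n]] C'(2) by (simp add: mult_right_mono order.trans)
        then show "Lq_pow 2 (\<lambda>x. p n x - phi x) \<le> ennreal e"
        proof (rule enn_comb[OF _ An])
          show "C' * (e/C') + 0 \<le> e" using C' by simp
        qed (use C' e in auto)
      qed
    qed
  next
    case c3
    define Phi where "Phi = Lq_pow 2 phi"
    have "Phi < \<infinity>" using Phi_fin unfolding Phi_def by (rule le_less_trans) simp
    then have Phi: "Phi \<noteq> \<infinity>" by simp
    show ?thesis unfolding e_crit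
    proof (intro allI impI)
      fix e :: real assume e: "e > 0"
      have "Phi + 0 < Phi + ennreal (e/2)" using Phi e by (simp only: ennreal_add_left_cancel_less) simp
      then have "Phi < Phi + ennreal (e/2)" by simp
      then have "limsup (\<lambda>n. Lq_pow 2 (p n)) < Phi + ennreal (e/2)" using c3 unfolding Phi_def by (rule le_less_trans[rotated])
      then have ev1: "eventually (\<lambda>n. Lq_pow 2 (p n) < Phi + ennreal (e/2)) sequentially"
        by (rule Limsup_lessD)
      have "eventually (\<lambda>n. Lq_pow 1 (\<lambda>x. p n x - phi x) \<le> ennreal (e/4)) sequentially"
        using Ae[of "e/4"] e by simp
      with ev1 show "eventually (\<lambda>n. Lq_pow 2 (\<lambda>x. p n x - phi x) \<le> ennreal e) sequentially"
      proof (rule eventually_elim2)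
        fix n assume P: "Lq_pow 2 (p n) < Phi + ennreal (e/2)" and An: "Lq_pow 1 (\<lambda>x. p n x - phi x) \<le> ennreal (e/4)"
        have "Phi + Lq_pow 2 (\<lambda>x. p n x - phi x) \<le> Lq_pow 2 (p n) + 2 * Lq_pow 1 (\<lambda>x. p n x - phi x)"
          using L3c[OF pm p0, of n] unfolding Phi_def by (simp add: add.commute)
        also have "\<dots> \<le> (Phi + ennreal (e/2)) + 2 * ennreal (e/4)"
          using P An by (intro add_mono mult_left_mono) auto
        also have "2 * ennreal (e/4) = ennreal (e/2)"
        proof -
          have "ennreal (e/2) = ennreal (2 * (e/4))" by simp
          also have "\<dots> = ennreal 2 * ennreal (e/4)" by (rule ennreal_mult) (use e in auto)
          finally show ?thesis by simp
        qed
        also have "Phi + ennreal (e/2) + ennreal (e/2) = Phi + ennreal e"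
          using e by (simp add: add.assoc ennreal_plus[symmetric] del: ennreal_plus)
        finally show "Lq_pow 2 (\<lambda>x. p n x - phi x) \<le> ennreal e"
          using Phi by (simp add: ennreal_add_left_cancel_le)
      qed
    qed
  qed
qed


theorem corollary2p5:
  fixes p :: "nat \<Rightarrow> real \<Rightarrow> real"
  assumes dens: "\<And>n. is_density (p n)"
    and mean: "\<And>n. integrable lborel (\<lambda>x. x * p n x) \<and> (\<integral>x. x * p n x \<partial>lborel) = 0"
    and var: "\<And>n. integrable lborel (\<lambda>x. x\<^sup>2 * p n x) \<and> (\<integral>x. x\<^sup>2 * p n x \<partial>lborel) = 1"
    and moment: "\<exists>s>2. \<exists>C::real. \<forall>n. (\<integral>\<^sup>+ x. ennreal (\<bar>x\<bar> powr s * p n x) \<partial>lborel) \<le> ennreal C"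
    and cond: "(\<exists>q>2. \<exists>C::real. \<forall>n. Lq_pow q (\<lambda>x. p n x - phi x) \<le> ennreal C)
             \<or> (\<exists>C::real. \<forall>n. Linf_le (\<lambda>x. p n x - phi x) C)
             \<or> limsup (\<lambda>n. Lq_pow 2 (p n)) \<le> Lq_pow 2 phi"
  shows "((\<lambda>n. Lq_pow 1 (\<lambda>x. p n x - phi x)) \<longlonglongrightarrow> 0 \<longleftrightarrow>
          (\<lambda>n. Lq_pow 2 (\<lambda>x. p n x - phi x)) \<longlonglongrightarrow> 0)
       \<and> ((\<lambda>n. Lq_pow 2 (\<lambda>x. p n x - phi x)) \<longlonglongrightarrow> 0 \<longleftrightarrow>
          (\<lambda>n. KL_gauss (p n)) \<longlonglongrightarrow> 0)"
proof -
  have pm: "\<And>n. p n \<in> borel_measurable lborel" and p0: "\<And>n x. 0 \<le> p n x"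
    and p1: "\<And>n. (\<integral>\<^sup>+x. ennreal (p n x) \<partial>lborel) = 1"
    using dens unfolding is_density_def by auto
  have m2: "\<And>n. (\<integral>\<^sup>+x. ennreal (x^2 * p n x) \<partial>lborel) = 1"
  proof -
    fix n
    have "(\<integral>\<^sup>+x. ennreal (x^2 * p n x) \<partial>lborel) = ennreal (\<integral>x. x^2 * p n x \<partial>lborel)"
      using var[of n] p0[of n] by (intro nn_integral_eq_integral) auto
    then show "(\<integral>\<^sup>+x. ennreal (x^2 * p n x) \<partial>lborel) = 1" using var[of n] by simp
  qed
  obtain s C where s: "s > 2" and C: "\<And>n. (\<integral>\<^sup>+ x. ennreal (\<bar>x\<bar> powr s * p n x) \<partial>lborel) \<le> ennreal C"
    using moment by blast
  have KL: "(\<lambda>n. KL_gauss (p n)) = (\<lambda>n. enn2ereal (\<integral>\<^sup>+x. ennreal (GG (p n) x) \<partial>lborel))"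
    using L5[OF pm p0 p1] by auto
  have KLiff: "(\<lambda>n. KL_gauss (p n)) \<longlonglongrightarrow> 0 \<longleftrightarrow> (\<lambda>n. \<integral>\<^sup>+x. ennreal (GG (p n) x) \<partial>lborel) \<longlonglongrightarrow> 0"
  proof -
    have "(0::ereal) = enn2ereal 0" by (simp add: zero_ennreal.rep_eq)
    then show ?thesis unfolding KL by (metis tendsto_enn2ereal_iff)
  qed
  let ?A = "(\<lambda>n. Lq_pow 1 (\<lambda>x. p n x - phi x)) \<longlonglongrightarrow> 0"
  let ?D = "(\<lambda>n. Lq_pow 2 (\<lambda>x. p n x - phi x)) \<longlonglongrightarrow> 0"
  let ?N = "(\<lambda>n. \<integral>\<^sup>+x. ennreal (GG (p n) x) \<partial>lborel) \<longlonglongrightarrow> 0"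
  have a: "?A \<Longrightarrow> ?D" by (rule dirA[of p]) (use pm p0 cond in auto)
  have b: "?D \<Longrightarrow> ?A" by (rule dirB[of p]) (use pm p0 m2 in auto)
  have c: "?D \<Longrightarrow> ?N" by (rule dirC[of p s C]) (use pm p0 s C in auto)
  have d: "?N \<Longrightarrow> ?A" by (rule dirD[of p]) (use pm p0 p1 in auto)
  show ?thesis
    unfolding KLiff using a b c d by blast
qed

end
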